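(* Let $q$ be a primitive $2d$-th root of unity with $d\ge2$ (and $q\neq\pm1,\pm i$). Then the subalgebra $H_{\{1\}}^{Inv}$ of invariant elements of $H_{\{1\}}$ is spanned (equivalently, generated as an algebra) by the monomials $x_1^{kd}y_1^{k'd}$ with $k,k'\in\mathbb N_0$ and $4\mid(k-k')$.
   Context: Fix a square root $q^{1/2}$ of $q$. $H_{\{1\}}$ is the unital $\mathbb C$-algebra generated by $x_1,y_1$ with relation $x_1y_1=qy_1x_1$. $U_q(gl(2,\mathbb R))$, generated by $E,F,K^{\pm1},L^{\pm1}$, acts on it by $L1=K1=1$, $E1=F1=0$, $Lx_1=q^{1/2}x_1$, $Ly_1=q^{1/2}y_1$, $Kx_1=q^{-1/2}x_1$, $Ky_1=q^{1/2}y_1$, $Ex_1=q^{1/2}y_1$, $Ey_1=0$, $Fx_1=0$, $Fy_1=q^{-1/2}x_1$, extended by $K(ab)=K(a)K(b)$, $L(ab)=L(a)L(b)$, $E(ab)=E(a)K(b)+K^{-1}(a)E(b)$, $F(ab)=F(a)K(b)+K^{-1}(a)F(b)$. An element $a$ is an invariant element of degree $r$ if $Ea=Fa=0$, $Ka=a$, $La=q^{r/2}a$; $H_{\{1\}}^{Inv}$ is the subalgebra spanned by all invariant elements. *)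

theory Defs
  imports Complex_Main "HOL-Library.Poly_Mapping"
begin

text \<open>The quantum plane H_{1}: elements are finite linear combinations of the
PBW monomials x1^a y1^b, i.e. finitely supported maps (a,b) to coefficient.\<close>

type_synonym qplane = "(nat \<times> nat) \<Rightarrow>\<^sub>0 complex"

definition mon :: "nat \<Rightarrow> nat \<Rightarrow> qplane" where
  "mon a b = Poly_Mapping.single (a, b) 1"

definition qx :: qplane where "qx = mon 1 0"
definition qy :: qplane where "qy = mon 0 1"
definition qone :: qplane where "qone = mon 0 0"

definition smul :: "complex \<Rightarrow> qplane \<Rightarrow> qplane" where
  "smul c f = Poly_Mapping.map (\<lambda>z. c * z) f"

text \<open>Multiplication: from x1 y1 = q y1 x1 we get y1^b x1^c = q^(-bc) x1^c y1^b, hence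
  (x1^a y1^b)(x1^c y1^e) = q^(-bc) x1^(a+c) y1^(b+e).\<close>
definition qmult :: "complex \<Rightarrow> qplane \<Rightarrow> qplane \<Rightarrow> qplane" where
  "qmult q f g = (\<Sum>(a, b)\<in>Poly_Mapping.keys f. \<Sum>(c, e)\<in>Poly_Mapping.keys g.
      Poly_Mapping.single (a + c, b + e)
        (Poly_Mapping.lookup f (a, b) * Poly_Mapping.lookup g (c, e) * inverse q ^ (b * c)))"

definition is_linear :: "(qplane \<Rightarrow> qplane) \<Rightarrow> bool" where
  "is_linear T \<longleftrightarrow> (\<forall>f g. T (f + g) = T f + T g) \<and> (\<forall>c f. T (smul c f) = smul c (T f))"

definition lin_span :: "qplane set \<Rightarrow> qplane set" where
  "lin_span S = {f. \<exists>F c. finite F \<and> F \<subseteq> S \<and> f = (\<Sum>v\<in>F. smul (c v) v)}"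

text \<open>The U_q(gl(2,R))-module structure on H_{1}, with s = q^(1/2) and Kinv the
  action of K^(-1).  The maps are linear, K,L,Kinv multiplicative, E,F twisted derivations.\<close>
definition Uq_action :: "complex \<Rightarrow> complex \<Rightarrow> (qplane \<Rightarrow> qplane) \<Rightarrow> (qplane \<Rightarrow> qplane)
    \<Rightarrow> (qplane \<Rightarrow> qplane) \<Rightarrow> (qplane \<Rightarrow> qplane) \<Rightarrow> (qplane \<Rightarrow> qplane) \<Rightarrow> bool" where
  "Uq_action q s E F K Kinv L \<longleftrightarrow>
     is_linear E \<and> is_linear F \<and> is_linear K \<and> is_linear Kinv \<and> is_linear L \<and>
     (\<forall>a. K (Kinv a) = a) \<and> (\<forall>a. Kinv (K a) = a) \<and>
     L qone = qone \<and> K qone = qone \<and> E qone = 0 \<and> F qone = 0 \<and>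
     L qx = smul s qx \<and> L qy = smul s qy \<and>
     K qx = smul (inverse s) qx \<and> K qy = smul s qy \<and>
     E qx = smul s qy \<and> E qy = 0 \<and> F qx = 0 \<and> F qy = smul (inverse s) qx \<and>
     (\<forall>a b. K (qmult q a b) = qmult q (K a) (K b)) \<and>
     (\<forall>a b. L (qmult q a b) = qmult q (L a) (L b)) \<and>
     (\<forall>a b. E (qmult q a b) = qmult q (E a) (K b) + qmult q (Kinv a) (E b)) \<and>
     (\<forall>a b. F (qmult q a b) = qmult q (F a) (K b) + qmult q (Kinv a) (F b))"

definition invariant_elem :: "complex \<Rightarrow> (qplane \<Rightarrow> qplane) \<Rightarrow> (qplane \<Rightarrow> qplane)
    \<Rightarrow> (qplane \<Rightarrow> qplane) \<Rightarrow> (qplane \<Rightarrow> qplane) \<Rightarrow> nat \<Rightarrow> qplane \<Rightarrow> bool" where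
  "invariant_elem s E F K L r a \<longleftrightarrow> E a = 0 \<and> F a = 0 \<and> K a = a \<and> L a = smul (s ^ r) a"

definition Inv_subalg :: "complex \<Rightarrow> (qplane \<Rightarrow> qplane) \<Rightarrow> (qplane \<Rightarrow> qplane)
    \<Rightarrow> (qplane \<Rightarrow> qplane) \<Rightarrow> (qplane \<Rightarrow> qplane) \<Rightarrow> qplane set" where
  "Inv_subalg s E F K L = lin_span {a. \<exists>r. invariant_elem s E F K L r a}"

end

theory Submission imports Defs begin

lemma lookup_smul: "Poly_Mapping.lookup (smul c f) k = c * Poly_Mapping.lookup f k"
  unfolding smul_def by (simp add: map.rep_eq when_def)

lemma smul_single: "smul c (Poly_Mapping.single k v) = Poly_Mapping.single k (c * v)"
  by (rule poly_mapping_eqI) (simp add: lookup_smul lookup_single when_def)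

lemma keys_smul: "Poly_Mapping.keys (smul c f) \<subseteq> Poly_Mapping.keys f"
  by (auto simp: in_keys_iff lookup_smul)

lemma qmult_single: "qmult q (Poly_Mapping.single (a,b) u) (Poly_Mapping.single (c,e) v)
   = Poly_Mapping.single (a+c,b+e) (u*v*inverse q^(b*c))"
  unfolding qmult_def by (cases "u = 0"; cases "v = 0") auto

lemma qmult_zero1[simp]: "qmult q 0 g = 0" unfolding qmult_def by simp
lemma qmult_zero2[simp]: "qmult q f 0 = 0" unfolding qmult_def by simp

lemma expansion: "f = (\<Sum>p\<in>Poly_Mapping.keys f. Poly_Mapping.single p (Poly_Mapping.lookup f p))"
proof (rule poly_mapping_eqI)
  fix k
  have "Poly_Mapping.lookup (\<Sum>p\<in>Poly_Mapping.keys f. Poly_Mapping.single p (Poly_Mapping.lookup f p)) k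
     = (\<Sum>p\<in>Poly_Mapping.keys f. (if p = k then Poly_Mapping.lookup f p else 0))"
    by (simp add: lookup_sum lookup_single when_def eq_commute)
  also have "\<dots> = Poly_Mapping.lookup f k" by (simp add: in_keys_iff)
  finally show "Poly_Mapping.lookup f k = Poly_Mapping.lookup (\<Sum>p\<in>Poly_Mapping.keys f. Poly_Mapping.single p (Poly_Mapping.lookup f p)) k" by simp
qed

lemma single_mon: "Poly_Mapping.single (a,b) c = smul c (mon a b)"
  unfolding mon_def by (simp add: smul_single)

lemma lin0: "is_linear T \<Longrightarrow> T 0 = 0"
  unfolding is_linear_def by (metis add_0 add_left_cancel add.right_neutral)

lemma lin_sum: "is_linear T \<Longrightarrow> T (\<Sum>p\<in>A. g p) = (\<Sum>p\<in>A. T (g p))"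
  by (induction A rule: infinite_finite_induct) (auto simp: lin0 is_linear_def)

lemma lookup_lin: assumes "is_linear T"
  shows "Poly_Mapping.lookup (T f) k = (\<Sum>p\<in>Poly_Mapping.keys f. Poly_Mapping.lookup f p * Poly_Mapping.lookup (T (mon (fst p) (snd p))) k)"
proof -
  have "T f = (\<Sum>p\<in>Poly_Mapping.keys f. T (smul (Poly_Mapping.lookup f p) (mon (fst p) (snd p))))"
    by (subst expansion) (simp add: lin_sum[OF assms] single_mon[symmetric])
  also have "\<dots> = (\<Sum>p\<in>Poly_Mapping.keys f. smul (Poly_Mapping.lookup f p) (T (mon (fst p) (snd p))))"
    using assms unfolding is_linear_def by simp
  finally show ?thesis by (simp add: lookup_sum lookup_smul)
qed

fun ce :: "complex \<Rightarrow> nat \<Rightarrow> complex" where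
  "ce s 0 = 0" | "ce s (Suc a) = ce s a * inverse s ^ 3 + s ^ Suc a"
fun cf :: "complex \<Rightarrow> nat \<Rightarrow> complex" where
  "cf s 0 = 0" | "cf s (Suc b) = cf s b * s + inverse s ^ Suc b * inverse (s^2) ^ b"

lemma ce_closed: "s \<noteq> 0 \<Longrightarrow> ce s a * s ^ (3*a) = s^4 * (\<Sum>i<a. (s^4)^i)"
proof (induction a)
  case (Suc a)
  have i3: "inverse s ^ 3 * s^3 = 1" using Suc.prems by (simp add: field_simps)
  have pw: "s ^ Suc a * (s^3 * s^(3*a)) = s^4 * (s^4)^a"
  proof -
    have "s ^ Suc a * (s^3 * s^(3*a)) = s^(Suc a + (3 + 3*a))" by (simp only: power_add)
    also have "Suc a + (3 + 3*a) = 4 + 4*a" by simp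
    finally show ?thesis by (simp only: power_add power_mult)
  qed
  have "ce s (Suc a) * s ^ (3 * Suc a) = (ce s a * inverse s ^ 3 + s ^ Suc a) * (s^3 * s^(3*a))"
    by (simp add: power_add flip: power_add)
  also have "\<dots> = ce s a * s^(3*a) * (inverse s ^ 3 * s^3) + s ^ Suc a * (s^3 * s^(3*a))"
    by (simp add: algebra_simps)
  also have "\<dots> = s^4 * (\<Sum>i<Suc a. (s^4)^i)" by (simp only: pw i3 mult_1_right Suc.IH[OF Suc.prems] sum.lessThan_Suc distrib_left)
  finally show ?case .
qed simp

lemma cf_closed: "s \<noteq> 0 \<Longrightarrow> cf s b * inverse s ^ b = inverse s^2 * (\<Sum>i<b. (inverse s^4)^i)"
proof (induction b)
  case (Suc b)
  have i1: "s * inverse s = 1" using Suc.prems by (simp add: field_simps)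
  have "cf s (Suc b) * inverse s ^ (Suc b) = (cf s b * s + inverse s ^ Suc b * inverse s ^ (2*b)) * (inverse s * inverse s ^ b)"
    by (simp add: power_mult power_inverse)
  also have "\<dots> = cf s b * inverse s ^ b * (s * inverse s) + inverse s^2 * (inverse s^4)^b"
    by (simp add: algebra_simps flip: power_add power_mult)
  also have "\<dots> = inverse s^2 * (\<Sum>i<Suc b. (inverse s^4)^i)" using Suc by (simp add: i1 algebra_simps)
  finally show ?case .
qed simp


abbreviation sg :: "nat \<times> nat \<Rightarrow> complex \<Rightarrow> qplane" where "sg p c \<equiv> Poly_Mapping.single p c"

lemma mon_split: "mon a b = qmult q (mon a 0) (mon 0 b)"
  unfolding mon_def by (simp add: qmult_single)
lemma monx: "mon (Suc a) 0 = qmult q (mon a 0) qx"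
  unfolding mon_def qx_def by (simp add: qmult_single)
lemma mony: "mon 0 (Suc b) = qmult q (mon 0 b) qy"
  unfolding mon_def qy_def by (simp add: qmult_single)

locale act =
  fixes q s :: complex and E F K Kinv L :: "qplane \<Rightarrow> qplane"
  assumes U: "Uq_action q s E F K Kinv L" and sq: "s^2 = q" and s0: "s \<noteq> 0"
begin

lemma linE: "is_linear E" and linF: "is_linear F" and linK: "is_linear K"
  and linKi: "is_linear Kinv" and linL: "is_linear L"
  using U unfolding Uq_action_def by auto

lemma Ksm: "K (smul c f) = smul c (K f)" using linK unfolding is_linear_def by auto
lemma Kism: "Kinv (smul c f) = smul c (Kinv f)" using linKi unfolding is_linear_def by auto
lemma Lsm: "L (smul c f) = smul c (L f)" using linL unfolding is_linear_def by auto
lemma Esm: "E (smul c f) = smul c (E f)" using linE unfolding is_linear_def by auto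
lemma Fsm: "F (smul c f) = smul c (F f)" using linF unfolding is_linear_def by auto

lemma Kmul: "K (qmult q a b) = qmult q (K a) (K b)" 
  and Lmul: "L (qmult q a b) = qmult q (L a) (L b)"
  and Emul: "E (qmult q a b) = qmult q (E a) (K b) + qmult q (Kinv a) (E b)"
  and Fmul: "F (qmult q a b) = qmult q (F a) (K b) + qmult q (Kinv a) (F b)"
  and KKi: "K (Kinv f) = f" and KiK: "Kinv (K f) = f"
  using U unfolding Uq_action_def by auto

lemma basics: "L (mon 0 0) = mon 0 0" "K (mon 0 0) = mon 0 0" "E (mon 0 0) = 0" "F (mon 0 0) = 0"
  "L qx = sg (1,0) s" "L qy = sg (0,1) s" "K qx = sg (1,0) (inverse s)" "K qy = sg (0,1) s"
  "E qx = sg (0,1) s" "E qy = 0" "F qx = 0" "F qy = sg (1,0) (inverse s)"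
  using U unfolding Uq_action_def qone_def qx_def qy_def mon_def by (auto simp: smul_single)

lemma K_x: "K (mon a 0) = sg (a,0) (inverse s ^ a)"
proof (induction a)
  case 0 show ?case using basics(2) by (simp add: mon_def)
next
  case (Suc a)
  show ?case unfolding monx[of a q] Kmul Suc basics by (simp add: qmult_single mult_ac)
qed

lemma K_y: "K (mon 0 b) = sg (0,b) (s ^ b)"
proof (induction b)
  case 0 show ?case using basics(2) by (simp add: mon_def)
next
  case (Suc b)
  show ?case unfolding mony[of b q] Kmul Suc basics by (simp add: qmult_single mult_ac)
qed

lemma K_mon: "K (mon a b) = sg (a,b) (inverse s ^ a * s ^ b)"
  unfolding mon_split[of a b q] Kmul K_x K_y by (simp add: qmult_single)

lemma L_x: "L (mon a 0) = sg (a,0) (s ^ a)"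
proof (induction a)
  case 0 show ?case using basics(1) by (simp add: mon_def)
next
  case (Suc a)
  show ?case unfolding monx[of a q] Lmul Suc basics by (simp add: qmult_single mult_ac)
qed

lemma L_y: "L (mon 0 b) = sg (0,b) (s ^ b)"
proof (induction b)
  case 0 show ?case using basics(1) by (simp add: mon_def)
next
  case (Suc b)
  show ?case unfolding mony[of b q] Lmul Suc basics by (simp add: qmult_single mult_ac)
qed

lemma L_mon: "L (mon a b) = sg (a,b) (s ^ (a + b))"
  unfolding mon_split[of a b q] Lmul L_x L_y by (simp add: qmult_single power_add)

lemma K_sg: "K (sg (a,b) c) = sg (a,b) (c * (inverse s ^ a * s ^ b))"
  by (simp add: single_mon Ksm K_mon, simp add: mon_def smul_single)

lemma Ki_mon: "Kinv (mon a b) = sg (a,b) (s ^ a * inverse s ^ b)"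
proof -
  have "mon a b = K (sg (a,b) (s ^ a * inverse s ^ b))"
    unfolding K_sg using s0 by (simp add: mon_def field_simps)
  then show ?thesis using KiK by metis
qed

lemma E_x: "E (mon a 0) = sg (a-1,1) (ce s a)"
proof (induction a)
  case 0 show ?case using basics(3) by simp
next
  case (Suc a)
  have "E (mon (Suc a) 0) = qmult q (sg (a-1,1) (ce s a)) (sg (1,0) (inverse s)) + qmult q (sg (a,0) (s^a)) (sg (0,1) s)"
    unfolding monx[of a q] Emul Suc basics Ki_mon by simp
  also have "\<dots> = sg (a,1) (ce s (Suc a))"
  proof (cases a)
    case 0 then show ?thesis by (simp add: qmult_single)
  next
    case (Suc a') then show ?thesis using sq[symmetric] s0
      by (simp add: qmult_single single_add[symmetric], intro arg_cong[where f="sg _"], simp add: field_simps power2_eq_square power3_eq_cube)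
  qed
  finally show ?case by simp
qed

lemma E_y: "E (mon 0 b) = 0"
proof (induction b)
  case 0 show ?case using basics(3) by simp
next
  case (Suc b)
  show ?case unfolding mony[of b q] Emul Suc basics by simp
qed

lemma E_mon: "E (mon a b) = sg (a-1,b+1) (ce s a * s^b)"
  unfolding mon_split[of a b q] Emul E_x E_y K_y by (simp add: qmult_single)

lemma F_x: "F (mon a 0) = 0"
proof (induction a)
  case 0 show ?case using basics(4) by simp
next
  case (Suc a)
  show ?case unfolding monx[of a q] Fmul Suc basics by simp
qed

lemma F_y: "F (mon 0 b) = sg (1,b-1) (cf s b)"
proof (induction b)
  case 0 show ?case using basics(4) by simp
next
  case (Suc b)
  have "F (mon 0 (Suc b)) = qmult q (sg (1,b-1) (cf s b)) (sg (0,1) s) + qmult q (sg (0,b) (inverse s ^ b)) (sg (1,0) (inverse s))"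
    unfolding mony[of b q] Fmul Suc basics Ki_mon by simp
  also have "\<dots> = sg (1,b) (cf s (Suc b))"
  proof (cases b)
    case 0 then show ?thesis by (simp add: qmult_single)
  next
    case (Suc b') then show ?thesis using sq[symmetric]
      by (simp add: qmult_single single_add[symmetric] power_inverse mult_ac)
  qed
  finally show ?case by simp
qed

lemma F_mon: "F (mon a b) = sg (a+1,b-1) (s^a * cf s b)"
  unfolding mon_split[of a b q] Fmul F_x F_y Ki_mon by (simp add: qmult_single)

end

locale act2 = act +
  fixes d :: nat
  assumes d2: "d \<ge> 2" and q2d: "q ^ (2*d) = 1" and prim: "\<forall>m. 0 < m \<and> m < 2*d \<longrightarrow> q ^ m \<noteq> 1"
begin

lemma s4: "s^4 = q^2"
proof -
  have e0: "s^4 = (s^2)^2" by (simp add: power_mult[symmetric])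
  then show ?thesis using sq by simp
qed

lemma qpow: "q ^ n = 1 \<longleftrightarrow> 2*d dvd n"
proof
  assume h: "q ^ n = 1"
  have "q ^ n = q ^ (2*d*(n div (2*d)) + n mod (2*d))" by simp
  also have "\<dots> = (q^(2*d))^(n div (2*d)) * q ^ (n mod (2*d))" by (simp only: power_add power_mult)
  finally have "q ^ (n mod (2*d)) = 1" using h q2d by simp
  moreover have "n mod (2*d) < 2*d" using d2 by simp
  ultimately have "n mod (2*d) = 0" using prim by auto
  then show "2*d dvd n" by auto
next
  assume "2*d dvd n" then obtain k where "n = 2*d*k" by auto
  then show "q ^ n = 1" using q2d by (simp add: power_mult)
qed

lemma spow: "s ^ n = 1 \<longleftrightarrow> 4*d dvd n"
proof
  assume h: "s ^ n = 1"
  have "q ^ n = (s^n)^2" unfolding sq[symmetric] by (simp add: power_mult[symmetric] mult.commute)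
  then have "q ^ n = 1" using h by simp
  then have "2*d dvd n" using qpow by simp
  then obtain k where k: "n = 2*d*k" by auto
  have "q ^ (d*k) = 1" using h sq k by (simp add: power_mult mult.assoc)
  then have "2*d dvd d*k" using qpow by simp
  then show "4*d dvd n" using k by (metis mult_dvd_mono dvd_refl mult.assoc numeral_Bit0 mult_2 numeral_One one_add_one)
next
  assume "4*d dvd n" then obtain k where "n = 4*d*k" by (auto elim: dvdE)
  then have "s ^ n = ((s^4)^d)^k" by (simp add: power_mult)
  also have "\<dots> = 1" using q2d by (simp add: s4 power_mult)
  finally show "s ^ n = 1" .
qed

lemma q2ne: "q^2 \<noteq> 1" using prim d2 by auto

lemma ce_zero: "ce s a = 0 \<longleftrightarrow> d dvd a"
proof -
  have "ce s a = 0 \<longleftrightarrow> (\<Sum>i<a. (q^2)^i) = 0"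
  proof -
    have e0: "s^4 = (s^2)^2" by (simp add: power_mult[symmetric])
    have e: "s^4 = q^2" using e0 sq by simp
    have "ce s a * s ^ (3*a) = q^2 * (\<Sum>i<a. (q^2)^i)" using ce_closed[OF s0, of a] e by simp
    then show ?thesis using s0 e by auto
  qed
  also have "\<dots> \<longleftrightarrow> (q^2)^a = 1" using q2ne by (simp add: sum_gp_strict)
  also have "\<dots> \<longleftrightarrow> d dvd a" by (simp add: qpow flip: power_mult)
  finally show ?thesis .
qed

lemma cf_zero: "cf s b = 0 \<longleftrightarrow> d dvd b"
proof -
  have e0: "s^4 = (s^2)^2" by (simp add: power_mult[symmetric])
  have e: "inverse s ^ 4 = inverse (q^2)" using sq e0 by (simp add: power_inverse)
  have "cf s b = 0 \<longleftrightarrow> (\<Sum>i<b. (inverse (q^2))^i) = 0"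
    using cf_closed[OF s0, of b] s0 e by auto
  also have "\<dots> \<longleftrightarrow> (inverse (q^2))^b = 1" using q2ne by (simp add: sum_gp_strict)
  also have "\<dots> \<longleftrightarrow> d dvd b" by (simp add: qpow power_inverse flip: power_mult)
  finally show ?thesis .
qed

end



context act begin

lemma term_F: "1 \<le> b \<Longrightarrow> Poly_Mapping.lookup (sg (a'+1, b'-1) (s^a' * cf s b')) (a+1, b-1) = (if (a',b') = (a,b) then s^a * cf s b else 0)"
  apply (cases b; cases b')
     apply (simp_all add: lookup_single when_def cf.simps(1) del: cf.simps(2))
  done

lemma term_E: "1 \<le> a \<Longrightarrow> Poly_Mapping.lookup (sg (a'-1, b'+1) (ce s a' * s^b')) (a-1, b+1) = (if (a',b') = (a,b) then ce s a * s^b else 0)"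
  apply (cases a; cases a')
     apply (simp_all add: lookup_single when_def ce.simps(1) del: ce.simps(2))
  done

lemma term_K: "Poly_Mapping.lookup (sg (a', b') (inverse s ^ a' * s^b')) (a, b) = (if (a',b') = (a,b) then inverse s ^ a * s^b else 0)"
  by (simp add: lookup_single when_def)

lemma pick: "(\<Sum>p\<in>Poly_Mapping.keys (f::qplane). (if p = k then Poly_Mapping.lookup f p * c else 0)) = Poly_Mapping.lookup f k * c"
  by (simp add: in_keys_iff)

lemma lookup_E: assumes "1 \<le> a"
  shows "Poly_Mapping.lookup (E f) (a-1, b+1) = Poly_Mapping.lookup f (a,b) * (ce s a * s^b)"
proof -
  have "Poly_Mapping.lookup (E f) (a-1, b+1) = (\<Sum>p\<in>Poly_Mapping.keys f. (if p = (a,b) then Poly_Mapping.lookup f p * (ce s a * s^b) else 0))"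
  proof (subst lookup_lin[OF linE], rule sum.cong[OF refl])
    fix p assume "p \<in> Poly_Mapping.keys f"
    obtain a' b' where p: "p = (a',b')" by fastforce
    show "Poly_Mapping.lookup f p * Poly_Mapping.lookup (E (mon (fst p) (snd p))) (a - 1, b + 1) = (if p = (a,b) then Poly_Mapping.lookup f p * (ce s a * s^b) else 0)"
      unfolding p E_mon fst_conv snd_conv term_E[OF assms] by simp
  qed
  then show ?thesis by (simp only: pick)
qed

lemma lookup_F: assumes "1 \<le> b"
  shows "Poly_Mapping.lookup (F f) (a+1, b-1) = Poly_Mapping.lookup f (a,b) * (s^a * cf s b)"
proof -
  have "Poly_Mapping.lookup (F f) (a+1, b-1) = (\<Sum>p\<in>Poly_Mapping.keys f. (if p = (a,b) then Poly_Mapping.lookup f p * (s^a * cf s b) else 0))"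
  proof (subst lookup_lin[OF linF], rule sum.cong[OF refl])
    fix p assume "p \<in> Poly_Mapping.keys f"
    obtain a' b' where p: "p = (a',b')" by fastforce
    show "Poly_Mapping.lookup f p * Poly_Mapping.lookup (F (mon (fst p) (snd p))) (a + 1, b - 1) = (if p = (a,b) then Poly_Mapping.lookup f p * (s^a * cf s b) else 0)"
      unfolding p F_mon fst_conv snd_conv term_F[OF assms] by simp
  qed
  then show ?thesis by (simp only: pick)
qed

lemma lookup_K:
  shows "Poly_Mapping.lookup (K f) (a, b) = Poly_Mapping.lookup f (a,b) * (inverse s ^ a * s^b)"
proof -
  have "Poly_Mapping.lookup (K f) (a, b) = (\<Sum>p\<in>Poly_Mapping.keys f. (if p = (a,b) then Poly_Mapping.lookup f p * (inverse s ^ a * s^b) else 0))"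
  proof (subst lookup_lin[OF linK], rule sum.cong[OF refl])
    fix p assume "p \<in> Poly_Mapping.keys f"
    obtain a' b' where p: "p = (a',b')" by fastforce
    show "Poly_Mapping.lookup f p * Poly_Mapping.lookup (K (mon (fst p) (snd p))) (a, b) = (if p = (a,b) then Poly_Mapping.lookup f p * (inverse s ^ a * s^b) else 0)"
      unfolding p K_mon fst_conv snd_conv term_K by simp
  qed
  then show ?thesis by (simp only: pick)
qed

end

definition Pset :: "nat \<Rightarrow> (nat \<times> nat) set" where
  "Pset d = {p. \<exists>k k'. p = (k*d, k'*d) \<and> (4::int) dvd (int k - int k')}"

context act2 begin

lemma seq_aux: "a \<le> b \<Longrightarrow> s^a = s^b \<longleftrightarrow> 4*d dvd (b - a)"
proof -
  assume ab: "a \<le> b"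
  have "s^b = s^a * s^(b-a)" using ab by (simp flip: power_add)
  then have "s^a = s^b \<longleftrightarrow> s^(b-a) = 1" using s0 by auto
  then show ?thesis by (simp add: spow)
qed

lemma seq: "s^a = s^b \<longleftrightarrow> int (4*d) dvd (int a - int b)"
proof (cases "a \<le> b")
  case True
  have "int (4*d) dvd (int a - int b) \<longleftrightarrow> int (4*d) dvd int (b - a)"
    using True by (simp add: of_nat_diff dvd_diff_commute)
  then show ?thesis using seq_aux[OF True] by (simp only: of_nat_dvd_iff)
next
  case False
  then have ba: "b \<le> a" by simp
  have "int (4*d) dvd (int a - int b) \<longleftrightarrow> int (4*d) dvd int (a - b)"
    using ba by (simp add: of_nat_diff)
  then show ?thesis using seq_aux[OF ba] by (simp only: of_nat_dvd_iff eq_commute)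
qed

lemma d0: "d > 0" using d2 by simp

lemma Pset_iff: "d dvd a \<Longrightarrow> d dvd b \<Longrightarrow> s^a = s^b \<Longrightarrow> (a,b) \<in> Pset d"
proof -
  assume "d dvd a" "d dvd b" "s^a = s^b"
  then obtain k k' where kk: "a = k*d" "b = k'*d" and h: "int (4*d) dvd (int a - int b)"
    using seq by (metis dvdE mult.commute)
  have "int (4*d) dvd (int a - int b) \<longleftrightarrow> 4 * int d dvd (int k - int k') * int d"
    using kk by (simp add: algebra_simps)
  also have "\<dots> \<longleftrightarrow> 4 dvd (int k - int k')" using d0 by (simp add: mult.commute)
  finally show ?thesis using h kk unfolding Pset_def by auto
qed

lemma Pset_pow: "(a,b) \<in> Pset d \<Longrightarrow> d dvd a \<and> d dvd b \<and> s^a = s^b"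
proof -
  assume "(a,b) \<in> Pset d"
  then obtain k k' where kk: "a = k*d" "b = k'*d" and h: "4 dvd (int k - int k')"
    unfolding Pset_def by auto
  have "int (4*d) dvd (int a - int b) \<longleftrightarrow> 4 * int d dvd (int k - int k') * int d"
    using kk by (simp add: algebra_simps)
  also have "\<dots> \<longleftrightarrow> 4 dvd (int k - int k')" using d0 by (simp add: mult.commute)
  finally show ?thesis using h kk seq by auto
qed

lemma inv_keys: assumes "invariant_elem s E F K L r f" and "p \<in> Poly_Mapping.keys f"
  shows "p \<in> Pset d"
proof -
  obtain a b where p: "p = (a,b)" by fastforce
  have nz: "Poly_Mapping.lookup f (a,b) \<noteq> 0" using assms(2) p by (simp add: in_keys_iff)
  have E0: "E f = 0" and F0: "F f = 0" and K1: "K f = f" using assms(1) unfolding invariant_elem_def by auto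
  have da: "d dvd a"
  proof (cases "a = 0")
    case False
    then have "Poly_Mapping.lookup f (a,b) * (ce s a * s^b) = 0" using lookup_E[of a f b] E0 by simp
    then have "ce s a = 0" using nz s0 by simp
    then show ?thesis using ce_zero by simp
  qed simp
  have db: "d dvd b"
  proof (cases "b = 0")
    case False
    then have "Poly_Mapping.lookup f (a,b) * (s^a * cf s b) = 0" using lookup_F[of b f a] F0 by simp
    then have "cf s b = 0" using nz s0 by simp
    then show ?thesis using cf_zero by simp
  qed simp
  have "Poly_Mapping.lookup f (a,b) * (inverse s ^ a * s^b) = Poly_Mapping.lookup f (a,b)" using lookup_K[of f a b] K1 by simp
  then have "inverse s ^ a * s^b = 1" using nz by simp
  then have "s^a = s^b" using s0 by (simp add: field_simps power_inverse)
  then show ?thesis using da db p Pset_iff by simp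
qed

lemma mon_inv: assumes "(a,b) \<in> Pset d"
  shows "invariant_elem s E F K L (a+b) (mon a b)"
proof -
  have h: "d dvd a" "d dvd b" "s^a = s^b" using Pset_pow[OF assms] by auto
  have "ce s a = 0" using h(1) ce_zero by simp
  then have "E (mon a b) = 0" unfolding E_mon by simp
  moreover have "cf s b = 0" using h(2) cf_zero by simp
  then have "F (mon a b) = 0" unfolding F_mon by simp
  moreover have "inverse s ^ a * s ^ b = 1" using h(3) s0 by (simp add: power_inverse)
  then have "K (mon a b) = mon a b" unfolding K_mon by (simp add: mon_def)
  moreover have "L (mon a b) = smul (s^(a+b)) (mon a b)" unfolding L_mon by (simp add: mon_def smul_single)
  ultimately show ?thesis unfolding invariant_elem_def by simp
qed

end

lemma span_sub: assumes "\<forall>v\<in>S. Poly_Mapping.keys v \<subseteq> P" and "f \<in> lin_span S"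
  shows "Poly_Mapping.keys f \<subseteq> P"
proof -
  obtain G c where G: "finite G" "G \<subseteq> S" "f = (\<Sum>v\<in>G. smul (c v) v)"
    using assms(2) unfolding lin_span_def by auto
  have "Poly_Mapping.keys f \<subseteq> (\<Union>v\<in>G. Poly_Mapping.keys (smul (c v) v))" using G(3) keys_sum by metis
  also have "\<dots> \<subseteq> P" using G(2) assms(1) keys_smul by blast
  finally show ?thesis .
qed

abbreviation monp :: "nat \<times> nat \<Rightarrow> qplane" where "monp p \<equiv> mon (fst p) (snd p)"

lemma monp_inj: "inj monp"
proof (rule injI)
  fix p p' :: "nat \<times> nat" assume h: "monp p = monp p'"
  have "Poly_Mapping.lookup (monp p) p = 1" by (simp add: mon_def)
  then have "Poly_Mapping.lookup (monp p') p = 1" using h by simp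
  then show "p = p'" by (simp add: mon_def lookup_single when_def split: if_splits)
qed

lemma sub_span: assumes "\<forall>p\<in>P. monp p \<in> S" and "Poly_Mapping.keys f \<subseteq> P"
  shows "f \<in> lin_span S"
proof -
  define c where "c v = Poly_Mapping.lookup f (inv monp v)" for v
  have "f = (\<Sum>p\<in>Poly_Mapping.keys f. smul (c (monp p)) (monp p))"
    by (subst expansion) (simp add: c_def inv_f_f[OF monp_inj] single_mon[symmetric])
  also have "\<dots> = (\<Sum>v\<in>monp ` Poly_Mapping.keys f. smul (c v) v)"
    by (simp add: sum.reindex inj_on_def monp_inj[unfolded inj_def])
  finally have "f = (\<Sum>v\<in>monp ` Poly_Mapping.keys f. smul (c v) v)" .
  moreover have "monp ` Poly_Mapping.keys f \<subseteq> S" using assms by auto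
  ultimately show ?thesis unfolding lin_span_def
    by (intro CollectI exI[of _ "monp ` Poly_Mapping.keys f"] exI[of _ c] conjI) simp_all
qed

theorem proposition5p4:
  fixes q s :: complex and d :: nat
    and E F K Kinv L :: "qplane \<Rightarrow> qplane"
  assumes "d \<ge> 2"
    and "q ^ (2 * d) = 1" and "\<forall>m. 0 < m \<and> m < 2 * d \<longrightarrow> q ^ m \<noteq> 1"
    and "q \<notin> {1, -1, \<i>, -\<i>}"
    and "s ^ 2 = q"
    and "Uq_action q s E F K Kinv L"
  shows "Inv_subalg s E F K L =
           lin_span {mon (k * d) (k' * d) | k k'. (4::int) dvd (int k - int k')}"
proof -
  have q0: "q \<noteq> 0"
  proof
    assume "q = 0" then have "q ^ (2*d) = 0" using assms(1) by simp
    then show False using assms(2) by simp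
  qed
  then have s0: "s \<noteq> 0" using assms(5) by auto
  have A: "act2 q s E F K Kinv L d" unfolding act2_def act_def act2_axioms_def
    by (intro conjI) (rule assms(6), rule assms(5), rule s0, rule assms(1), rule assms(2), rule assms(3))
  interpret act2 q s E F K Kinv L d by (rule A)
  let ?I = "{a. \<exists>r. invariant_elem s E F K L r a}"
  let ?S = "{mon (k * d) (k' * d) | k k'. (4::int) dvd (int k - int k')}"
  have 1: "lin_span ?I = {f. Poly_Mapping.keys f \<subseteq> Pset d}"
  proof (intro set_eqI iffI)
    fix f :: qplane assume "f \<in> lin_span ?I"
    moreover have "\<forall>v\<in>?I. Poly_Mapping.keys v \<subseteq> Pset d"
    proof
      fix v assume "v \<in> ?I"
      then obtain r where "invariant_elem s E F K L r v" by blast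
      then show "Poly_Mapping.keys v \<subseteq> Pset d" using inv_keys by blast
    qed
    ultimately show "f \<in> {f. Poly_Mapping.keys f \<subseteq> Pset d}"
      using span_sub[of ?I "Pset d" f] by simp
  next
    fix f :: qplane assume "f \<in> {f. Poly_Mapping.keys f \<subseteq> Pset d}"
    moreover have "\<forall>p\<in>Pset d. monp p \<in> ?I"
    proof
      fix p assume p: "p \<in> Pset d"
      obtain a b where ab: "p = (a,b)" by fastforce
      show "monp p \<in> ?I" using mon_inv[of a b] p ab by auto
    qed
    ultimately show "f \<in> lin_span ?I" using sub_span[of "Pset d" ?I f] by simp
  qed
  have 2: "lin_span ?S = {f. Poly_Mapping.keys f \<subseteq> Pset d}"
  proof (intro set_eqI iffI)
    fix f :: qplane assume "f \<in> lin_span ?S"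
    moreover have "\<forall>v\<in>?S. Poly_Mapping.keys v \<subseteq> Pset d"
    proof
      fix v assume "v \<in> ?S"
      then obtain k k' where "v = mon (k*d) (k'*d)" "(4::int) dvd (int k - int k')" by blast
      then show "Poly_Mapping.keys v \<subseteq> Pset d" unfolding Pset_def mon_def by auto
    qed
    ultimately show "f \<in> {f. Poly_Mapping.keys f \<subseteq> Pset d}"
      using span_sub[of ?S "Pset d" f] by simp
  next
    fix f :: qplane assume "f \<in> {f. Poly_Mapping.keys f \<subseteq> Pset d}"
    moreover have "\<forall>p\<in>Pset d. monp p \<in> ?S" unfolding Pset_def by auto
    ultimately show "f \<in> lin_span ?S" using sub_span[of "Pset d" ?S f] by simp
  qed
  show ?thesis unfolding Inv_subalg_def 1 2 ..
qed

end
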